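(* Let $\phi$ be an embedding of the complete bipartite graph $K_{m,n}$ into a projective plane $\pi$. Then the set of complement lines of $\phi$ is disjoint from the set of lines onto which the edges of $K_{m,n}$ are mapped.
   Context: A finite projective plane: points and lines such that any two distinct points lie on a unique line and any two distinct lines meet in a unique point (with standard nondegeneracy). An embedding of a simple graph $G=(V,E)$ into $\pi$ is an injective map $\phi$ from $V$ to the points of $\pi$ such that the induced map $\overline{\phi}$ sending an edge $ab$ to the line through $\phi(a),\phi(b)$ is injective on $E$; the lines $\overline{\phi}(E)$ are the embedded edges. A complement line of the embedding $\phi$ is a line through $\phi(v)$ and $\phi(w)$ for distinct vertices $v,w$ of $G$ with $vw\notin E$. *)

theory Defs
  imports Main
begin

definition collinear :: "'p set \<Rightarrow> 'l set \<Rightarrow> ('p \<Rightarrow> 'l \<Rightarrow> bool) \<Rightarrow> 'p set \<Rightarrow> bool" where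
  "collinear P L I S \<longleftrightarrow> (\<exists>l\<in>L. \<forall>p\<in>S. I p l)"

definition projective_plane :: "'p set \<Rightarrow> 'l set \<Rightarrow> ('p \<Rightarrow> 'l \<Rightarrow> bool) \<Rightarrow> bool" where
  "projective_plane P L I \<longleftrightarrow>
     (\<forall>p\<in>P. \<forall>q\<in>P. p \<noteq> q \<longrightarrow> (\<exists>!l. l \<in> L \<and> I p l \<and> I q l)) \<and>
     (\<forall>l\<in>L. \<forall>m\<in>L. l \<noteq> m \<longrightarrow> (\<exists>!p. p \<in> P \<and> I p l \<and> I p m)) \<and>
     (\<exists>a\<in>P. \<exists>b\<in>P. \<exists>c\<in>P. \<exists>d\<in>P. card {a, b, c, d} = 4 \<and>
        (\<forall>S\<subseteq>{a, b, c, d}. card S = 3 \<longrightarrow> \<not> collinear P L I S))"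

definition finite_projective_plane :: "'p set \<Rightarrow> 'l set \<Rightarrow> ('p \<Rightarrow> 'l \<Rightarrow> bool) \<Rightarrow> bool" where
  "finite_projective_plane P L I \<longleftrightarrow> projective_plane P L I \<and> finite P \<and> finite L"

definition line_through :: "'p set \<Rightarrow> 'l set \<Rightarrow> ('p \<Rightarrow> 'l \<Rightarrow> bool) \<Rightarrow> 'p \<Rightarrow> 'p \<Rightarrow> 'l" where
  "line_through P L I p q = (THE l. l \<in> L \<and> I p l \<and> I q l)"

definition simple_graph :: "'v set \<Rightarrow> 'v set set \<Rightarrow> bool" where
  "simple_graph V E \<longleftrightarrow> (\<forall>e\<in>E. \<exists>a b. a \<in> V \<and> b \<in> V \<and> a \<noteq> b \<and> e = {a, b})"

definition edge_line :: "'p set \<Rightarrow> 'l set \<Rightarrow> ('p \<Rightarrow> 'l \<Rightarrow> bool) \<Rightarrow> ('v \<Rightarrow> 'p) \<Rightarrow> 'v set \<Rightarrow> 'l" where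
  "edge_line P L I \<phi> e = (THE l. l \<in> L \<and> (\<forall>v\<in>e. I (\<phi> v) l))"

definition embedding ::
  "'p set \<Rightarrow> 'l set \<Rightarrow> ('p \<Rightarrow> 'l \<Rightarrow> bool) \<Rightarrow> 'v set \<Rightarrow> 'v set set \<Rightarrow> ('v \<Rightarrow> 'p) \<Rightarrow> bool" where
  "embedding P L I V E \<phi> \<longleftrightarrow> \<phi> ` V \<subseteq> P \<and> inj_on \<phi> V \<and> inj_on (edge_line P L I \<phi>) E"

definition embedded_edges ::
  "'p set \<Rightarrow> 'l set \<Rightarrow> ('p \<Rightarrow> 'l \<Rightarrow> bool) \<Rightarrow> 'v set set \<Rightarrow> ('v \<Rightarrow> 'p) \<Rightarrow> 'l set" where
  "embedded_edges P L I E \<phi> = edge_line P L I \<phi> ` E"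

definition complement_lines ::
  "'p set \<Rightarrow> 'l set \<Rightarrow> ('p \<Rightarrow> 'l \<Rightarrow> bool) \<Rightarrow> 'v set \<Rightarrow> 'v set set \<Rightarrow> ('v \<Rightarrow> 'p) \<Rightarrow> 'l set" where
  "complement_lines P L I V E \<phi> =
     {line_through P L I (\<phi> v) (\<phi> w) | v w. v \<in> V \<and> w \<in> V \<and> v \<noteq> w \<and> {v, w} \<notin> E}"

definition Kmn_V :: "nat \<Rightarrow> nat \<Rightarrow> (nat + nat) set" where
  "Kmn_V m n = Inl ` {..<m} \<union> Inr ` {..<n}"

definition Kmn_E :: "nat \<Rightarrow> nat \<Rightarrow> (nat + nat) set set" where
  "Kmn_E m n = {{Inl i, Inr j} | i j. i < m \<and> j < n}"

end

theory Submission
  imports Defs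
begin

lemma uniq_line:
  assumes "projective_plane P L I" "p \<in> P" "q \<in> P" "p \<noteq> q"
    "l \<in> L" "I p l" "I q l" "l' \<in> L" "I p l'" "I q l'"
  shows "l = l'"
proof -
  have "\<forall>p\<in>P. \<forall>q\<in>P. p \<noteq> q \<longrightarrow> (\<exists>!l. l \<in> L \<and> I p l \<and> I q l)"
    using assms(1) unfolding projective_plane_def by (elim conjE)
  then have "\<exists>!l. l \<in> L \<and> I p l \<and> I q l" using assms(2-4) by blast
  then show ?thesis using assms(5-10) by blast
qed

lemma line_through_eq:
  assumes "projective_plane P L I" "p \<in> P" "q \<in> P" "p \<noteq> q"
  shows "line_through P L I p q \<in> L \<and> I p (line_through P L I p q) \<and> I q (line_through P L I p q)"
proof -
  have "\<forall>p\<in>P. \<forall>q\<in>P. p \<noteq> q \<longrightarrow> (\<exists>!l. l \<in> L \<and> I p l \<and> I q l)"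
    using assms(1) unfolding projective_plane_def by (elim conjE)
  then have "\<exists>!l. l \<in> L \<and> I p l \<and> I q l" using assms(2-4) by blast
  then show ?thesis unfolding line_through_def by (rule theI')
qed

lemma edge_line_eq:
  assumes "projective_plane P L I" "\<phi> x \<in> P" "\<phi> y \<in> P" "\<phi> x \<noteq> \<phi> y"
    "l \<in> L" "I (\<phi> x) l" "I (\<phi> y) l"
  shows "edge_line P L I \<phi> {x, y} = l"
proof -
  have "\<exists>!l. l \<in> L \<and> (\<forall>v\<in>{x,y}. I (\<phi> v) l)"
  proof (rule ex1I[of _ l])
    show "l \<in> L \<and> (\<forall>v\<in>{x,y}. I (\<phi> v) l)" using assms by simp
  next
    fix l' assume "l' \<in> L \<and> (\<forall>v\<in>{x,y}. I (\<phi> v) l')"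
    then have "l' \<in> L" "I (\<phi> x) l'" "I (\<phi> y) l'" by auto
    then show "l' = l" using uniq_line[OF assms(1-4)] assms(5-7) by blast
  qed
  moreover have "l \<in> L \<and> (\<forall>v\<in>{x,y}. I (\<phi> v) l)" using assms by auto
  ultimately show ?thesis unfolding edge_line_def by (rule the1_equality)
qed

theorem lemma3p7:
  fixes P :: "'p set" and L :: "'l set" and I :: "'p \<Rightarrow> 'l \<Rightarrow> bool"
    and m n :: nat and \<phi> :: "nat + nat \<Rightarrow> 'p"
  assumes "finite_projective_plane P L I"
    and "embedding P L I (Kmn_V m n) (Kmn_E m n) \<phi>"
  shows "complement_lines P L I (Kmn_V m n) (Kmn_E m n) \<phi>
           \<inter> embedded_edges P L I (Kmn_E m n) \<phi> = {}"
proof (rule ccontr)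
  let ?V = "Kmn_V m n" and ?E = "Kmn_E m n"
  have pp: "projective_plane P L I" using assms(1) unfolding finite_projective_plane_def by (elim conjE)
  have sub: "\<phi> ` ?V \<subseteq> P" and inj: "inj_on \<phi> ?V" and injE: "inj_on (edge_line P L I \<phi>) ?E"
    using assms(2) unfolding embedding_def by auto
  assume "complement_lines P L I ?V ?E \<phi> \<inter> embedded_edges P L I ?E \<phi> \<noteq> {}"
  then obtain l where l1: "l \<in> complement_lines P L I ?V ?E \<phi>" and l2: "l \<in> embedded_edges P L I ?E \<phi>"
    by blast
  from l1 obtain v w where lv: "l = line_through P L I (\<phi> v) (\<phi> w)" and
    vw: "v \<in> ?V" "w \<in> ?V" "v \<noteq> w" "{v, w} \<notin> ?E"
    unfolding complement_lines_def by blast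
  from l2 obtain e where e: "e \<in> ?E" "l = edge_line P L I \<phi> e"
    unfolding embedded_edges_def by blast
  from e(1) obtain a b where ab: "a < m" "b < n" "e = {Inl a, Inr b}"
    unfolding Kmn_E_def by blast
  have le: "l = edge_line P L I \<phi> {Inl a, Inr b}" using e ab by simp
  have inV: "\<And>i. i < m \<Longrightarrow> Inl i \<in> ?V" "\<And>j. j < n \<Longrightarrow> Inr j \<in> ?V"
    unfolding Kmn_V_def by auto
  have P': "\<And>x. x \<in> ?V \<Longrightarrow> \<phi> x \<in> P" using sub by blast
  have ne: "\<And>x y. x \<in> ?V \<Longrightarrow> y \<in> ?V \<Longrightarrow> x \<noteq> y \<Longrightarrow> \<phi> x \<noteq> \<phi> y"
    using inj inj_on_def by metis
  have lw: "l \<in> L" "I (\<phi> v) l" "I (\<phi> w) l"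
    using line_through_eq[OF pp P'[OF vw(1)] P'[OF vw(2)] ne[OF vw(1-3)]] lv by auto
  obtain l0 where l0: "l0 \<in> L" "I (\<phi> (Inl a)) l0" "I (\<phi> (Inr b)) l0"
    using line_through_eq[OF pp P'[OF inV(1)[OF ab(1)]] P'[OF inV(2)[OF ab(2)]]
        ne[OF inV(1)[OF ab(1)] inV(2)[OF ab(2)]]] by blast
  have "edge_line P L I \<phi> {Inl a, Inr b} = l0"
    using edge_line_eq[of P L I \<phi> "Inl a" "Inr b" l0] pp P'[OF inV(1)[OF ab(1)]] P'[OF inV(2)[OF ab(2)]]
        ne[OF inV(1)[OF ab(1)] inV(2)[OF ab(2)]] l0 by simp
  with le have la: "I (\<phi> (Inl a)) l" "I (\<phi> (Inr b)) l" using l0 by auto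
  have vE: "\<And>i j. i < m \<Longrightarrow> j < n \<Longrightarrow> {Inl i, Inr j} \<in> ?E" unfolding Kmn_E_def by blast
  show False
  proof (cases v)
    case (Inl i)
    then obtain i' where w: "w = Inl i'"
      using vw vE unfolding Kmn_V_def by (cases w) (auto simp: insert_commute)
    have im: "i < m" "i' < m" using vw Inl w unfolding Kmn_V_def by auto
    obtain c where c: "c < m" "c \<noteq> a" "I (\<phi> (Inl c)) l"
      using vw(3) Inl w im lw by (cases "i = a") auto
    have "edge_line P L I \<phi> {Inl c, Inr b} = l"
      using edge_line_eq[of P L I \<phi> "Inl c" "Inr b" l] pp P'[OF inV(1)[OF c(1)]] P'[OF inV(2)[OF ab(2)]]
        ne[OF inV(1)[OF c(1)] inV(2)[OF ab(2)]] lw(1) c(3) la(2) by simp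
    with le have "{Inl c, Inr b} = {Inl a, Inr b}"
      using injE vE[OF c(1) ab(2)] vE[OF ab(1) ab(2)] by (metis inj_on_def)
    with c show False by (auto simp: doubleton_eq_iff)
  next
    case (Inr i)
    then obtain i' where w: "w = Inr i'"
      using vw vE unfolding Kmn_V_def by (cases w) (auto simp: insert_commute)
    have im: "i < n" "i' < n" using vw Inr w unfolding Kmn_V_def by auto
    obtain c where c: "c < n" "c \<noteq> b" "I (\<phi> (Inr c)) l"
      using vw(3) Inr w im lw by (cases "i = b") auto
    have "edge_line P L I \<phi> {Inl a, Inr c} = l"
      using edge_line_eq[of P L I \<phi> "Inl a" "Inr c" l] pp P'[OF inV(1)[OF ab(1)]] P'[OF inV(2)[OF c(1)]]
        ne[OF inV(1)[OF ab(1)] inV(2)[OF c(1)]] lw(1) la(1) c(3) by simp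
    with le have "{Inl a, Inr c} = {Inl a, Inr b}"
      using injE vE[OF ab(1) c(1)] vE[OF ab(1) ab(2)] by (metis inj_on_def)
    with c show False by (auto simp: doubleton_eq_iff)
  qed
qed

end
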